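(* Let $X_1,\dots,X_d$ be discrete random variables, $X_j\in\{0,\dots,r_j\}$, fix $M\subseteq\{1,\dots,d\}$, and assume complete independence of $(X_j)_{j\in M}$ with strictly positive joint probability vector $\pi=p(M)$. Let $\mathcal V=\bigcup_k\mathcal P(N_k)$ for a family of subsets $N_k\subsetneq M$, $a,b\subseteq M$ disjoint nonempty, $\mathcal A=\{t\subseteq M: t\cap a\ne\emptyset, t\cap b\ne\emptyset\}$, $\mathcal I\subseteq\mathcal V\cap\mathcal A$ and $\mathcal R=\mathcal V\setminus\mathcal I$. If $\mathcal H$ is a valid replacement for $\mathcal I$, then the matrix $Q_{\mathcal I\mathcal H\mid\mathcal R}=F_{\mathcal I\mathcal H}-F_{\mathcal I\mathcal R}F_{\mathcal R\mathcal R}^{-1}F_{\mathcal R\mathcal H}$ is non singular.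
   Context: $\mathcal P(\cdot)$ denotes the family of nonempty subsets. For $r\subseteq M$, $G_r=\bigotimes_{j\in M}G_j$ with $G_j$ the identity of order $r_j+1$ without its first column if $j\in r$ and $\mathbf 1_{r_j+1}$ otherwise. For disjoint $t,h$ and categories $j_h$ (all nonzero), $G_{t,h}(j_h)$ is the submatrix of $G_{t\cup h}$ formed by the columns with the variables in $h$ equal to $j_h$. $G_{\mathcal I}$ (resp. $G_{\mathcal R}$) juxtaposes $G_t$ for $t\in\mathcal I$ (resp. $\mathcal R$); $G_{\mathcal H}$ juxtaposes the blocks $G_{t,h}(j_h)$ for the elements $t\cup h$ of $\mathcal H$. $\Omega=\mathrm{diag}(\pi)-\pi\pi'$, $F_{\mathcal X\mathcal Y}=G_{\mathcal X}'\Omega G_{\mathcal Y}$. Let $\mathcal K$ be the family of maximal sets of $\mathcal I\cup\mathcal R$; for $t\in\mathcal I$, $\mathcal K(t)=\{m\in\mathcal K:t\subseteq m\}$, $\mathcal K(t,h)$ is the family of nonempty $\mathcal G\subseteq\mathcal K(t)$ with $h\cap\bigcap_{m\in\mathcal G}m=\emptyset$, and $\bar{\mathcal K}(t,h)=\mathcal P(\mathcal K)\setminus\mathcal K(t,h)$. $\mathcal H$ is a valid replacement for $\mathcal I$ if: (i) there is a one-to-one correspondence between $\mathcal I$ and $\mathcal H$ such that each $t\in\mathcal I$ corresponds to some $t\cup h\in\mathcal H$ with $t\cap h=\emptyset$, the variables of $h$ being fixed to given categories $j_h$ different from the reference category $0$; (ii) $\sum_{\mathcal G\in\mathcal K(t,h)}(-1)^{|\mathcal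 G|}\ne0$ for each such pair; (iii) there is a total order $\prec$ on $\mathcal I$ compatible with set inclusion such that for every $t\cup h\in\mathcal H$ and $\mathcal G\in\bar{\mathcal K}(t,h)$, the set $s=(\bigcap_{m\in\mathcal G}m)\cap(t\cup h)$ satisfies either $s\in\mathcal R$, or $s\in\mathcal I$ and $s\prec t$. *)

theory Defs
  imports Complex_Main "HOL-Combinatorics.Permutations"
begin

(* Cells of the contingency table of the variables in M: configurations
   x with x j in {0..r j} for j in M, and x j = 0 (dummy) outside M. *)
definition cells :: "(nat \<Rightarrow> nat) \<Rightarrow> nat set \<Rightarrow> (nat \<Rightarrow> nat) set" where
  "cells r M = {x. (\<forall>j\<in>M. x j \<le> r j) \<and> (\<forall>j. j \<notin> M \<longrightarrow> x j = 0)}"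

(* Column labels of G_t: non-reference categories c j in {1..r j} for j in t. *)
definition tcols :: "(nat \<Rightarrow> nat) \<Rightarrow> nat set \<Rightarrow> (nat \<Rightarrow> nat) set" where
  "tcols r t = {c. (\<forall>j\<in>t. 1 \<le> c j \<and> c j \<le> r j) \<and> (\<forall>j. j \<notin> t \<longrightarrow> c j = 0)}"

definition fcols :: "(nat \<Rightarrow> nat) \<Rightarrow> nat set set \<Rightarrow> (nat set \<times> (nat \<Rightarrow> nat)) set" where
  "fcols r X = {(t, c). t \<in> X \<and> c \<in> tcols r t}"

(* Entry (x, c) of G_t = Kronecker product of the reduced identities
   (j in t) and ones vectors (j not in t). *)
definition Gmat :: "nat set \<Rightarrow> (nat \<Rightarrow> nat) \<Rightarrow> (nat \<Rightarrow> nat) \<Rightarrow> real" where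
  "Gmat t x c = (if \<forall>j\<in>t. x j = c j then 1 else 0)"

(* G_X for a family X: juxtaposition of the G_t, t in X. *)
definition Gfam :: "(nat \<Rightarrow> nat) \<Rightarrow> (nat set \<times> (nat \<Rightarrow> nat)) \<Rightarrow> real" where
  "Gfam x tc = Gmat (fst tc) x (snd tc)"

(* G_H: the block for t in I is G_{t,h t}(jh t), i.e. the columns of
   G_{t \<union> h t} in which the variables of h t equal jh t. *)
definition GH :: "(nat set \<Rightarrow> nat set) \<Rightarrow> (nat set \<Rightarrow> nat \<Rightarrow> nat)
      \<Rightarrow> (nat \<Rightarrow> nat) \<Rightarrow> (nat set \<times> (nat \<Rightarrow> nat)) \<Rightarrow> real" where
  "GH h jh x tc = Gmat (fst tc) x (snd tc) * Gmat (h (fst tc)) x (jh (fst tc))"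

definition Omega :: "((nat \<Rightarrow> nat) \<Rightarrow> real) \<Rightarrow> (nat \<Rightarrow> nat) \<Rightarrow> (nat \<Rightarrow> nat) \<Rightarrow> real" where
  "Omega \<pi> x y = (if x = y then \<pi> x else 0) - \<pi> x * \<pi> y"

definition Fmat :: "(nat \<Rightarrow> nat) set \<Rightarrow> ((nat \<Rightarrow> nat) \<Rightarrow> real)
      \<Rightarrow> ((nat \<Rightarrow> nat) \<Rightarrow> 'a \<Rightarrow> real) \<Rightarrow> ((nat \<Rightarrow> nat) \<Rightarrow> 'b \<Rightarrow> real)
      \<Rightarrow> 'a \<Rightarrow> 'b \<Rightarrow> real" where
  "Fmat C \<pi> GX GY i k = (\<Sum>x\<in>C. \<Sum>y\<in>C. GX x i * Omega \<pi> x y * GY y k)"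

definition inv_on :: "'a set \<Rightarrow> ('a \<Rightarrow> 'a \<Rightarrow> real) \<Rightarrow> 'a \<Rightarrow> 'a \<Rightarrow> real" where
  "inv_on S A = (SOME B. \<forall>i\<in>S. \<forall>k\<in>S.
       (\<Sum>j\<in>S. A i j * B j k) = (if i = k then 1 else 0) \<and>
       (\<Sum>j\<in>S. B i j * A j k) = (if i = k then 1 else 0))"

definition det_on :: "'a set \<Rightarrow> ('a \<Rightarrow> 'a \<Rightarrow> real) \<Rightarrow> real" where
  "det_on S A = (\<Sum>p\<in>{p. p permutes S}. of_int (sign p) * (\<Prod>i\<in>S. A i (p i)))"

definition nonsingular_on :: "'a set \<Rightarrow> ('a \<Rightarrow> 'a \<Rightarrow> real) \<Rightarrow> bool" where
  "nonsingular_on S A \<longleftrightarrow> det_on S A \<noteq> 0"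

definition Pne :: "'a set \<Rightarrow> 'a set set" where
  "Pne A = {B. B \<subseteq> A \<and> B \<noteq> {}}"

definition maximal_sets :: "'a set set \<Rightarrow> 'a set set" where
  "maximal_sets V = {m \<in> V. \<not> (\<exists>m'\<in>V. m \<subset> m')}"

definition Kt :: "'a set set \<Rightarrow> 'a set \<Rightarrow> 'a set set" where
  "Kt K t = {m \<in> K. t \<subseteq> m}"

definition Kth :: "'a set set \<Rightarrow> 'a set \<Rightarrow> 'a set \<Rightarrow> 'a set set set" where
  "Kth K t h = {G. G \<noteq> {} \<and> G \<subseteq> Kt K t \<and> h \<inter> \<Inter>G = {}}"

definition Kbar :: "'a set set \<Rightarrow> 'a set \<Rightarrow> 'a set \<Rightarrow> 'a set set set" where
  "Kbar K t h = Pne K - Kth K t h"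

(* H (given by t \<mapsto> t \<union> h t with categories jh t on h t) is a valid
   replacement for I, with respect to R and the maximal sets of I \<union> R. *)
definition valid_replacement ::
  "(nat \<Rightarrow> nat) \<Rightarrow> nat set \<Rightarrow> nat set set \<Rightarrow> nat set set
     \<Rightarrow> (nat set \<Rightarrow> nat set) \<Rightarrow> (nat set \<Rightarrow> nat \<Rightarrow> nat) \<Rightarrow> bool" where
  "valid_replacement r M I R h jh \<longleftrightarrow>
     (let K = maximal_sets (I \<union> R) in
       \<comment> \<open>(i)\<close>
       inj_on (\<lambda>t. t \<union> h t) I \<and>
       (\<forall>t\<in>I. h t \<subseteq> M \<and> t \<inter> h t = {} \<and>
              (\<forall>j\<in>h t. 1 \<le> jh t j \<and> jh t j \<le> r j) \<and>
              (\<forall>j. j \<notin> h t \<longrightarrow> jh t j = 0)) \<and>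
       \<comment> \<open>(ii)\<close>
       (\<forall>t\<in>I. (\<Sum>G\<in>Kth K t (h t). (-1::int) ^ card G) \<noteq> 0) \<and>
       \<comment> \<open>(iii)\<close>
       (\<exists>ord. ord \<subseteq> I \<times> I \<and> strict_linear_order_on I ord \<and>
          (\<forall>s\<in>I. \<forall>t\<in>I. s \<subset> t \<longrightarrow> (s, t) \<in> ord) \<and>
          (\<forall>t\<in>I. \<forall>G\<in>Kbar K t (h t).
             let s = (\<Inter>G) \<inter> (t \<union> h t) in s \<in> R \<or> (s \<in> I \<and> (s, t) \<in> ord))))"

end

theory Submission
  imports Defs "Jordan_Normal_Form.Determinant"
begin


lemma det_on_transfer:
  fixes S :: "'a set" and A :: "'a \<Rightarrow> 'a \<Rightarrow> real"
  assumes fS: "finite S" and f: "bij_betw f {0..<n} S"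
  shows "det_on S A = det (mat n n (\<lambda>(i,j). A (f i) (f j)))"
proof -
  define f' where "f' = inv_into {0..<n} f"
  have f'f: "\<And>x. x \<in> {0..<n} \<Longrightarrow> f' (f x) = x" using f unfolding f'_def
    by (meson bij_betw_inv_into_left)
  have ff': "\<And>x. x \<in> S \<Longrightarrow> f (f' x) = x" using f unfolding f'_def
    by (meson bij_betw_inv_into_right)
  have f'b: "bij_betw f' S {0..<n}" using f unfolding f'_def by (simp add: bij_betw_inv_into)
  define cj where "cj = (\<lambda>p x. if x \<in> S then f (p (f' x)) else x)"
  have cjp: "\<And>p. p permutes {0..<n} \<Longrightarrow> cj p permutes S \<and> sign (cj p) = sign p"
  proof -
    fix p assume p: "p permutes {0..<n}"
    have l: "permutes_bij_finite p {0..<n} S f f'"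
      by unfold_locales (use p f f'f in auto)
    show "cj p permutes S \<and> sign (cj p) = sign p"
      using permutes_bij.permutes_p'[OF permutes_bij_finite.axioms(1)[OF l]]
        permutes_bij_finite.sign_p'[OF l] unfolding cj_def by auto
  qed
  have bij: "bij_betw cj {p. p permutes {0..<n}} {q. q permutes S}"
  proof (rule bij_betw_byWitness[where f' = "\<lambda>q x. if x \<in> {0..<n} then f' (q (f x)) else x"])
    show "\<forall>a\<in>{p. p permutes {0..<n}}.
       (\<lambda>x. if x \<in> {0..<n} then f' (cj a (f x)) else x) = a"
    proof
      fix p assume "p \<in> {p. p permutes {0..<n}}"
      hence p: "p permutes {0..<n}" by simp
      show "(\<lambda>x. if x \<in> {0..<n} then f' (cj p (f x)) else x) = p"
      proof
        fix x show "(if x \<in> {0..<n} then f' (cj p (f x)) else x) = p x"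
          using p f'f bij_betwE[OF f] permutes_in_image[OF p] permutes_not_in[OF p]
          unfolding cj_def by auto
      qed
    qed
    show "\<forall>a'\<in>{q. q permutes S}. cj (\<lambda>x. if x \<in> {0..<n} then f' (a' (f x)) else x) = a'"
    proof
      fix q assume "q \<in> {q. q permutes S}"
      hence q: "q permutes S" by simp
      show "cj (\<lambda>x. if x \<in> {0..<n} then f' (q (f x)) else x) = q"
      proof
        fix x show "cj (\<lambda>x. if x \<in> {0..<n} then f' (q (f x)) else x) x = q x"
          using q ff' bij_betwE[OF f'b] permutes_in_image[OF q] permutes_not_in[OF q]
          unfolding cj_def by auto
      qed
    qed
    show "cj ` {p. p permutes {0..<n}} \<subseteq> {q. q permutes S}" using cjp by auto
    show "(\<lambda>q x. if x \<in> {0..<n} then f' (q (f x)) else x) ` {q. q permutes S}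
          \<subseteq> {p. p permutes {0..<n}}"
    proof
      fix p assume "p \<in> (\<lambda>q x. if x \<in> {0..<n} then f' (q (f x)) else x) ` {q. q permutes S}"
      then obtain q where q: "q permutes S" and pq: "p = (\<lambda>x. if x \<in> {0..<n} then f' (q (f x)) else x)" by auto
      have l: "permutes_bij_finite q S {0..<n} f' f"
        by unfold_locales (use q f'b ff' fS in auto)
      show "p \<in> {p. p permutes {0..<n}}"
        using permutes_bij.permutes_p'[OF permutes_bij_finite.axioms(1)[OF l]] unfolding pq by simp
    qed
  qed
  have "det (mat n n (\<lambda>(i,j). A (f i) (f j))) =
        (\<Sum>p\<in>{p. p permutes {0..<n}}. of_int (sign p) * (\<Prod>i = 0..<n. A (f i) (f (p i))))"
    by (subst det_def') (auto simp: intro!: sum.cong prod.cong dest: permutes_in_image)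
  also have "\<dots> = (\<Sum>p\<in>{p. p permutes {0..<n}}. of_int (sign (cj p)) * (\<Prod>x\<in>S. A x (cj p x)))"
  proof (rule sum.cong[OF refl])
    fix p assume "p \<in> {p. p permutes {0..<n}}"
    hence p: "p permutes {0..<n}" by simp
    have "(\<Prod>x\<in>S. A x (cj p x)) = (\<Prod>i = 0..<n. A (f i) (cj p (f i)))"
      using prod.reindex_bij_betw[OF f, of "\<lambda>x. A x (cj p x)"] by simp
    also have "\<dots> = (\<Prod>i = 0..<n. A (f i) (f (p i)))"
      using f'f bij_betwE[OF f] unfolding cj_def by (intro prod.cong) auto
    finally show "of_int (sign p) * (\<Prod>i = 0..<n. A (f i) (f (p i))) =
        of_int (sign (cj p)) * (\<Prod>x\<in>S. A x (cj p x))" using cjp[OF p] by simp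
  qed
  also have "\<dots> = det_on S A"
    unfolding det_on_def using sum.reindex_bij_betw[OF bij, of "\<lambda>q. of_int (sign q) * (\<Prod>x\<in>S. A x (q x))"]
    by simp
  finally show ?thesis by simp
qed

lemma finite_bij_nat: "finite S \<Longrightarrow> \<exists>f. bij_betw f {0..<card S} S"
  using ex_bij_betw_nat_finite by blast

lemma mat_transfer_setup:
  assumes fS: "finite S"
  shows "\<exists>n::nat. \<exists>f f'. bij_betw f {0..<n} S \<and> bij_betw f' S {0..<n} \<and>
    (\<forall>x. x < n \<longrightarrow> f' (f x) = x) \<and> (\<forall>x. x \<in> S \<longrightarrow> f (f' x) = x)"
proof -
  obtain f where f: "bij_betw f {0..<card S} S" using finite_bij_nat[OF fS] by blast
  define f' where "f' = inv_into {0..<card S} f"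
  have f'f: "\<And>x. x < card S \<Longrightarrow> f' (f x) = x" using f unfolding f'_def
    by (meson atLeastLessThan_iff bij_betw_inv_into_left zero_le)
  have ff': "\<And>x. x \<in> S \<Longrightarrow> f (f' x) = x" using f unfolding f'_def
    by (meson bij_betw_inv_into_right)
  have f'b: "bij_betw f' S {0..<card S}" using f unfolding f'_def by (simp add: bij_betw_inv_into)
  show ?thesis using f f'b f'f ff' by blast
qed

lemma nonsing_of_inj:
  fixes A :: "'a \<Rightarrow> 'a \<Rightarrow> real"
  assumes fS: "finite S"
    and inj: "\<And>\<beta>. (\<forall>i\<in>S. (\<Sum>k\<in>S. A i k * \<beta> k) = 0) \<Longrightarrow> (\<forall>k\<in>S. \<beta> k = 0)"
  shows "nonsingular_on S A"
proof -
  obtain f and n :: nat and f' where f: "bij_betw f {0..<n} S" and f'b: "bij_betw f' S {0..<n}"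
    and f'f: "\<And>x. x < n \<Longrightarrow> f' (f x) = x" and ff': "\<And>x. x \<in> S \<Longrightarrow> f (f' x) = x"
    using mat_transfer_setup[OF fS] by auto
  have re: "(\<Sum>x\<in>S. g x) = (\<Sum>j<n. g (f j))" for g :: "'a \<Rightarrow> real"
    using sum.reindex_bij_betw[OF f, of g] by (simp add: atLeast0LessThan)
  define B where "B = mat n n (\<lambda>(i,j). A (f i) (f j))"
  have Bc: "B \<in> carrier_mat n n" unfolding B_def by simp
  show ?thesis
  proof (unfold nonsingular_on_def det_on_transfer[OF fS f], fold B_def, rule notI)
    assume "det B = 0"
    then obtain v where v: "v \<in> carrier_vec n" "v \<noteq> 0\<^sub>v n" "B *\<^sub>v v = 0\<^sub>v n"
      using det_0_iff_vec_prod_zero[OF Bc] by blast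
    define \<beta> where "\<beta> x = v $ (f' x)" for x
    have "\<forall>i\<in>S. (\<Sum>k\<in>S. A i k * \<beta> k) = 0"
    proof
      fix i assume i: "i \<in> S"
      have i0: "f' i < n" using f'b i by (auto simp: bij_betw_def)
      have "(\<Sum>k\<in>S. A i k * \<beta> k) = (\<Sum>j<n. A i (f j) * v $ j)"
        unfolding re \<beta>_def using f'f by simp
      also have "\<dots> = (B *\<^sub>v v) $ (f' i)"
        using i0 v(1) unfolding B_def by (simp add: scalar_prod_def ff'[OF i] atLeast0LessThan)
      also have "\<dots> = 0" using v(3) i0 by simp
      finally show "(\<Sum>k\<in>S. A i k * \<beta> k) = 0" .
    qed
    hence "\<forall>k\<in>S. \<beta> k = 0" by (rule inj)
    hence "v = 0\<^sub>v n"
    proof (intro eq_vecI)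
      fix j assume "\<forall>k\<in>S. \<beta> k = 0" "j < dim_vec (0\<^sub>v n)"
      then show "v $ j = 0\<^sub>v n $ j" using f f'f[of j] unfolding \<beta>_def
        by (auto simp: bij_betw_def) (metis atLeastLessThan_iff image_eqI zero_le)
    qed (use v in auto)
    with v(2) show False by simp
  qed
qed

lemma inv_of_inj:
  fixes A :: "'a \<Rightarrow> 'a \<Rightarrow> real"
  assumes fS: "finite S"
    and inj: "\<And>\<beta>. (\<forall>i\<in>S. (\<Sum>k\<in>S. A i k * \<beta> k) = 0) \<Longrightarrow> (\<forall>k\<in>S. \<beta> k = 0)"
  shows "\<forall>i\<in>S. \<forall>k\<in>S.
       (\<Sum>j\<in>S. A i j * inv_on S A j k) = (if i = k then 1 else 0) \<and>
       (\<Sum>j\<in>S. inv_on S A i j * A j k) = (if i = k then 1 else 0)"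
proof -
  obtain f and n :: nat and f' where f: "bij_betw f {0..<n} S" and f'b: "bij_betw f' S {0..<n}"
    and f'f: "\<And>x. x < n \<Longrightarrow> f' (f x) = x" and ff': "\<And>x. x \<in> S \<Longrightarrow> f (f' x) = x"
    using mat_transfer_setup[OF fS] by auto
  have re: "(\<Sum>x\<in>S. g x) = (\<Sum>j<n. g (f j))" for g :: "'a \<Rightarrow> real"
    using sum.reindex_bij_betw[OF f, of g] by (simp add: atLeast0LessThan)
  define B where "B = mat n n (\<lambda>(i,j). A (f i) (f j))"
  have Bc: "B \<in> carrier_mat n n" unfolding B_def by simp
  have "det B \<noteq> 0" using nonsing_of_inj[OF fS inj] det_on_transfer[OF fS f]
    unfolding nonsingular_on_def B_def by metis
  from det_non_zero_imp_unit[OF Bc this, of "()"]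
  obtain C where C: "C \<in> carrier_mat n n" "C * B = 1\<^sub>m n" "B * C = 1\<^sub>m n"
    unfolding Units_def ring_mat_def by auto
  define W where "W x y = C $$ (f' x, f' y)" for x y
  have in_n: "\<And>x. x \<in> S \<Longrightarrow> f' x < n" using f'b by (auto simp: bij_betw_def)
  have "\<forall>i\<in>S. \<forall>k\<in>S.
       (\<Sum>j\<in>S. A i j * W j k) = (if i = k then 1 else 0) \<and>
       (\<Sum>j\<in>S. W i j * A j k) = (if i = k then 1 else 0)"
  proof (intro ballI conjI)
    fix i k assume i: "i \<in> S" and k: "k \<in> S"
    have eq: "f' i = f' k \<longleftrightarrow> i = k" using ff' i k by metis
    have "(\<Sum>j\<in>S. A i j * W j k) = (B * C) $$ (f' i, f' k)"
      unfolding re W_def using in_n[OF i] in_n[OF k] C(1) f'f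
      by (simp add: B_def scalar_prod_def ff'[OF i] atLeast0LessThan)
    also have "\<dots> = (if i = k then 1 else 0)" using C(3) in_n[OF i] in_n[OF k] eq by simp
    finally show "(\<Sum>j\<in>S. A i j * W j k) = (if i = k then 1 else 0)" .
    have "(\<Sum>j\<in>S. W i j * A j k) = (C * B) $$ (f' i, f' k)"
      unfolding re W_def using in_n[OF i] in_n[OF k] C(1) f'f
      by (simp add: B_def scalar_prod_def ff'[OF k] atLeast0LessThan)
    also have "\<dots> = (if i = k then 1 else 0)" using C(2) in_n[OF i] in_n[OF k] eq by simp
    finally show "(\<Sum>j\<in>S. W i j * A j k) = (if i = k then 1 else 0)" .
  qed
  then have "\<exists>W. \<forall>i\<in>S. \<forall>k\<in>S.
       (\<Sum>j\<in>S. A i j * W j k) = (if i = k then 1 else 0) \<and>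
       (\<Sum>j\<in>S. W i j * A j k) = (if i = k then 1 else 0)" by blast
  then show ?thesis unfolding inv_on_def by (rule someI_ex)
qed



lemma cells_image:
  "cells r M = (\<lambda>g j. if j \<in> M then g j else 0) ` (PiE M (\<lambda>j. {0..r j}))"
proof (rule Set.set_eqI, rule iffI)
  fix x assume x: "x \<in> cells r M"
  let ?g = "restrict x M"
  have "?g \<in> PiE M (\<lambda>j. {0..r j})" using x by (auto simp: cells_def)
  moreover have "x = (\<lambda>j. if j \<in> M then ?g j else 0)" using x by (auto simp: cells_def)
  ultimately show "x \<in> (\<lambda>g j. if j \<in> M then g j else 0) ` (PiE M (\<lambda>j. {0..r j}))" by blast
next
  fix x assume "x \<in> (\<lambda>g j. if j \<in> M then g j else 0) ` (PiE M (\<lambda>j. {0..r j}))"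
  then obtain g where g: "g \<in> PiE M (\<lambda>j. {0..r j})" and x: "x = (\<lambda>j. if j \<in> M then g j else 0)"
    by blast
  have "\<forall>j\<in>M. g j \<le> r j" using g by (auto simp: PiE_iff)
  then show "x \<in> cells r M" unfolding x cells_def by auto
qed

lemma cells_inj: "inj_on (\<lambda>g j. if j \<in> M then g j else 0) (PiE M (\<lambda>j. {0..r j}))"
proof (rule inj_onI)
  fix g1 g2 assume g: "g1 \<in> PiE M (\<lambda>j. {0..r j})" "g2 \<in> PiE M (\<lambda>j. {0..r j})"
    and eq: "(\<lambda>j. if j \<in> M then g1 j else 0) = (\<lambda>j. if j \<in> M then g2 j else 0)"
  show "g1 = g2"
  proof (rule PiE_ext[OF g])
    fix j assume "j \<in> M" then show "g1 j = g2 j" using fun_cong[OF eq, of j] by simp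
  qed
qed

lemma finite_cells: "finite M \<Longrightarrow> finite (cells r M)"
  unfolding cells_image by (intro finite_imageI finite_PiE) auto

lemma sum_cells_prod:
  fixes q :: "nat \<Rightarrow> nat \<Rightarrow> real"
  assumes "finite M"
  shows "(\<Sum>x\<in>cells r M. \<Prod>j\<in>M. q j (x j)) = (\<Prod>j\<in>M. \<Sum>c\<in>{0..r j}. q j c)"
proof -
  have "(\<Sum>x\<in>cells r M. \<Prod>j\<in>M. q j (x j)) =
        (\<Sum>g\<in>PiE M (\<lambda>j. {0..r j}). \<Prod>j\<in>M. q j (if j \<in> M then g j else 0))"
    unfolding cells_image by (subst sum.reindex[OF cells_inj]) simp
  also have "\<dots> = (\<Sum>g\<in>PiE M (\<lambda>j. {0..r j}). \<Prod>j\<in>M. q j (g j))"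
    by (intro sum.cong prod.cong) auto
  also have "\<dots> = (\<Prod>j\<in>M. \<Sum>c\<in>{0..r j}. q j c)"
    by (rule prod_sum_PiE[symmetric]) (use assms in auto)
  finally show ?thesis .
qed

lemma tcols_sub_cells: "t \<subseteq> M \<Longrightarrow> tcols r t \<subseteq> cells r M"
  by (auto simp: tcols_def cells_def)

lemma finite_tcols: "finite M \<Longrightarrow> t \<subseteq> M \<Longrightarrow> finite (tcols r t)"
  by (rule finite_subset[OF tcols_sub_cells finite_cells])

lemma finite_fcols:
  assumes "finite M" "finite F" "\<forall>t\<in>F. t \<subseteq> M"
  shows "finite (fcols r F)"
proof -
  have "fcols r F \<subseteq> F \<times> cells r M" using tcols_sub_cells assms(3)
    by (auto simp: fcols_def)
  then show ?thesis by (rule finite_subset) (intro finite_cartesian_product assms finite_cells)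
qed

locale pset =
  fixes r :: "nat \<Rightarrow> nat" and M :: "nat set" and \<pi> :: "(nat \<Rightarrow> nat) \<Rightarrow> real"
  assumes finM: "finite M"
    and pos: "\<forall>x\<in>cells r M. \<pi> x > 0"
    and tot: "(\<Sum>x\<in>cells r M. \<pi> x) = 1"
    and indep: "\<forall>x\<in>cells r M. \<pi> x = (\<Prod>j\<in>M. \<Sum>y\<in>{y\<in>cells r M. y j = x j}. \<pi> y)"
begin

abbreviation "CC \<equiv> cells r M"

definition pm :: "nat \<Rightarrow> nat \<Rightarrow> real" where
  "pm j c = (\<Sum>y\<in>{y\<in>CC. y j = c}. \<pi> y)"

definition EE :: "((nat \<Rightarrow> nat) \<Rightarrow> real) \<Rightarrow> real" where
  "EE f = (\<Sum>x\<in>CC. \<pi> x * f x)"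

definition BB :: "((nat \<Rightarrow> nat) \<Rightarrow> real) \<Rightarrow> ((nat \<Rightarrow> nat) \<Rightarrow> real) \<Rightarrow> real" where
  "BB f g = (\<Sum>x\<in>CC. \<Sum>y\<in>CC. f x * Omega \<pi> x y * g y)"

lemma finC: "finite CC" using finite_cells[OF finM] .

lemma pm_alt: "pm j c = (\<Sum>y\<in>CC. if y j = c then \<pi> y else 0)"
  unfolding pm_def using finC by (simp add: sum.inter_filter)

lemma BB_EE: "BB f g = EE (\<lambda>x. f x * g x) - EE f * EE g"
proof -
  have "BB f g = (\<Sum>x\<in>CC. \<Sum>y\<in>CC. (if x = y then f x * \<pi> x * g y else 0) - (\<pi> x * f x) * (\<pi> y * g y))"
    unfolding BB_def Omega_def by (intro sum.cong refl) (simp add: algebra_simps)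
  also have "\<dots> = (\<Sum>x\<in>CC. (\<Sum>y\<in>CC. (if x = y then f x * \<pi> x * g y else 0)) - (\<Sum>y\<in>CC. (\<pi> x * f x) * (\<pi> y * g y)))"
    by (intro sum.cong refl) (rule sum_subtractf)
  also have "\<dots> = (\<Sum>x\<in>CC. f x * \<pi> x * g x - (\<Sum>y\<in>CC. (\<pi> x * f x) * (\<pi> y * g y)))"
    by (intro sum.cong refl) (simp add: sum.delta'[OF finC])
  also have "\<dots> = (\<Sum>x\<in>CC. \<pi> x * (f x * g x)) - (\<Sum>x\<in>CC. \<Sum>y\<in>CC. (\<pi> x * f x) * (\<pi> y * g y))"
    by (simp add: sum_subtractf algebra_simps)
  also have "\<dots> = (\<Sum>x\<in>CC. \<pi> x * (f x * g x)) - (\<Sum>x\<in>CC. \<pi> x * f x) * (\<Sum>y\<in>CC. \<pi> y * g y)"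
    by (simp add: sum_product)
  finally show ?thesis unfolding EE_def .
qed

lemma BB_sym: "BB f g = BB g f"
  unfolding BB_EE by (simp add: mult.commute)

lemma EE_sum: "EE (\<lambda>x. \<Sum>i\<in>S. c i * f i x) = (\<Sum>i\<in>S. c i * EE (f i))"
proof -
  have "(\<Sum>x\<in>CC. \<pi> x * (\<Sum>i\<in>S. c i * f i x)) = (\<Sum>x\<in>CC. \<Sum>i\<in>S. c i * (\<pi> x * f i x))"
    by (simp add: sum_distrib_left algebra_simps)
  also have "\<dots> = (\<Sum>i\<in>S. \<Sum>x\<in>CC. c i * (\<pi> x * f i x))" by (rule sum.swap)
  also have "\<dots> = (\<Sum>i\<in>S. c i * (\<Sum>x\<in>CC. \<pi> x * f i x))" by (simp add: sum_distrib_left)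
  finally show ?thesis unfolding EE_def .
qed

lemma BB_sum_left: "BB (\<lambda>x. \<Sum>i\<in>S. c i * f i x) g = (\<Sum>i\<in>S. c i * BB (f i) g)"
proof -
  have "EE (\<lambda>x. (\<Sum>i\<in>S. c i * f i x) * g x) = EE (\<lambda>x. \<Sum>i\<in>S. c i * (f i x * g x))"
    by (simp add: sum_distrib_right mult.assoc)
  also have "\<dots> = (\<Sum>i\<in>S. c i * EE (\<lambda>x. f i x * g x))" by (rule EE_sum)
  finally have 1: "EE (\<lambda>x. (\<Sum>i\<in>S. c i * f i x) * g x) = (\<Sum>i\<in>S. c i * EE (\<lambda>x. f i x * g x))" .
  have "BB (\<lambda>x. \<Sum>i\<in>S. c i * f i x) g =
     (\<Sum>i\<in>S. c i * EE (\<lambda>x. f i x * g x)) - (\<Sum>i\<in>S. c i * EE (f i)) * EE g"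
    unfolding BB_EE 1 EE_sum ..
  also have "\<dots> = (\<Sum>i\<in>S. c i * BB (f i) g)"
    unfolding BB_EE by (simp add: sum_distrib_right sum_subtractf right_diff_distrib mult.assoc)
  finally show ?thesis .
qed

lemma BB_sum_right: "BB g (\<lambda>x. \<Sum>i\<in>S. c i * f i x) = (\<Sum>i\<in>S. c i * BB g (f i))"
  using BB_sum_left[of c f S g] by (simp add: BB_sym)

lemma BB_diff_left: "BB (\<lambda>x. f x - g x) h = BB f h - BB g h"
  unfolding BB_def by (simp add: algebra_simps sum_subtractf)

lemma BB_const_left: "BB (\<lambda>x. k) h = 0"
proof -
  have "EE (\<lambda>x. k) = k" unfolding EE_def using tot by (simp add: sum_distrib_left[symmetric] mult.commute)
  moreover have "EE (\<lambda>x. k * h x) = k * EE h" unfolding EE_def by (simp add: sum_distrib_left algebra_simps)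
  ultimately show ?thesis unfolding BB_EE by simp
qed

lemma BB_self_zero:
  assumes "BB f f = 0"
  shows "\<forall>x\<in>CC. f x = EE f"
proof -
  define m where "m = EE f"
  have e: "\<And>x. \<pi> x * (f x - m)^2 = \<pi> x * (f x * f x) - 2 * m * (\<pi> x * f x) + m^2 * \<pi> x"
    by (simp add: power2_eq_square algebra_simps)
  have "(\<Sum>x\<in>CC. \<pi> x * (f x - m)^2) = (\<Sum>x\<in>CC. \<pi> x * (f x * f x) - 2 * m * (\<pi> x * f x) + m^2 * \<pi> x)"
    by (simp only: e)
  also have "\<dots> = EE (\<lambda>x. f x * f x) - 2 * m * EE f + m^2 * (\<Sum>x\<in>CC. \<pi> x)"
    unfolding EE_def by (simp only: sum.distrib sum_subtractf sum_distrib_left)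
  also have "\<dots> = BB f f" unfolding BB_EE m_def tot by (simp only: power2_eq_square)
  finally have s: "(\<Sum>x\<in>CC. \<pi> x * (f x - m)^2) = 0" using assms by simp
  have nn: "\<forall>x\<in>CC. 0 \<le> \<pi> x * (f x - m)^2" using pos by (simp add: less_imp_le)
  have z: "\<forall>x\<in>CC. \<pi> x * (f x - m)^2 = 0" using sum_nonneg_eq_0_iff[OF finC, of "\<lambda>x. \<pi> x * (f x - m)^2"] nn s by blast
  show ?thesis
  proof
    fix x assume x: "x \<in> CC"
    have "\<pi> x > 0" using pos x by simp
    moreover have "\<pi> x * (f x - m)^2 = 0" using z x by simp
    ultimately show "f x = EE f" unfolding m_def by simp
  qed
qed

lemma Gmat_prod: "finite A \<Longrightarrow> Gmat A x a = (\<Prod>j\<in>A. if x j = a j then 1 else 0)"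
proof (cases "\<forall>j\<in>A. x j = a j")
  case True then show ?thesis by (simp add: Gmat_def)
next
  case False
  assume fA: "finite A"
  from False obtain j where "j \<in> A" "x j \<noteq> a j" by blast
  then show ?thesis using False fA by (simp add: Gmat_def prod_zero_iff)
qed

lemma pm_sum_one: "j \<in> M \<Longrightarrow> (\<Sum>c\<in>{0..r j}. pm j c) = 1"
proof -
  assume j: "j \<in> M"
  have "(\<Sum>c\<in>{0..r j}. pm j c) = (\<Sum>c\<in>{0..r j}. \<Sum>y\<in>CC. if y j = c then \<pi> y else 0)"
    by (simp add: pm_alt)
  also have "\<dots> = (\<Sum>y\<in>CC. \<Sum>c\<in>{0..r j}. if y j = c then \<pi> y else 0)" by (rule sum.swap)
  also have "\<dots> = (\<Sum>y\<in>CC. \<pi> y)"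
  proof (rule sum.cong[OF refl])
    fix y assume "y \<in> CC"
    then have "y j \<in> {0..r j}" using j by (auto simp: cells_def)
    then show "(\<Sum>c\<in>{0..r j}. if y j = c then \<pi> y else 0) = \<pi> y" by (simp add: sum.delta')
  qed
  finally show ?thesis using tot by simp
qed

lemma pm_out: "j \<in> M \<Longrightarrow> r j < c \<Longrightarrow> pm j c = 0"
  unfolding pm_def by (rule sum.neutral) (auto simp: cells_def)

lemma pm_pos: "j \<in> M \<Longrightarrow> c \<le> r j \<Longrightarrow> pm j c > 0"
proof -
  assume j: "j \<in> M" and c: "c \<le> r j"
  define y where "y = (\<lambda>i. if i = j then c else 0::nat)"
  have y: "y \<in> {y\<in>CC. y j = c}" using j c by (auto simp: y_def cells_def)
  have fin: "finite {y\<in>CC. y j = c}" using finC by simp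
  have "0 < \<pi> y" using pos y by simp
  also have "\<pi> y \<le> pm j c" unfolding pm_def
    by (rule member_le_sum[OF y _ fin]) (use pos in \<open>auto intro: less_imp_le\<close>)
  finally show ?thesis .
qed

lemma pm_nonneg: "0 \<le> pm j c"
  unfolding pm_def by (rule sum_nonneg) (use pos in \<open>auto intro: less_imp_le\<close>)

lemma pi_prod: "x \<in> CC \<Longrightarrow> \<pi> x = (\<Prod>j\<in>M. pm j (x j))"
  using indep unfolding pm_def by simp

lemma EE_ind:
  assumes A: "A \<subseteq> M"
  shows "EE (\<lambda>x. Gmat A x a) = (\<Prod>j\<in>A. pm j (a j))"
proof -
  define q where "q j c = pm j c * (if j \<in> A then (if c = a j then 1 else 0) else 1)" for j c
  have fA: "finite A" using A finM finite_subset by blast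
  have "EE (\<lambda>x. Gmat A x a) = (\<Sum>x\<in>CC. \<Prod>j\<in>M. q j (x j))"
  proof (unfold EE_def, rule sum.cong[OF refl])
    fix x assume x: "x \<in> CC"
    have g: "Gmat A x a = (\<Prod>j\<in>M. if j \<in> A then (if x j = a j then 1 else 0) else 1)"
      unfolding Gmat_prod[OF fA] prod.If_cases[OF finM] using A
      by (simp add: Int_absorb1)
    show "\<pi> x * Gmat A x a = (\<Prod>j\<in>M. q j (x j))"
      unfolding pi_prod[OF x] g q_def prod.distrib by simp
  qed
  also have "\<dots> = (\<Prod>j\<in>M. \<Sum>c\<in>{0..r j}. q j c)" by (rule sum_cells_prod[OF finM])
  also have "\<dots> = (\<Prod>j\<in>M. if j \<in> A then pm j (a j) else 1)"
  proof (rule prod.cong[OF refl])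
    fix j assume j: "j \<in> M"
    show "(\<Sum>c\<in>{0..r j}. q j c) = (if j \<in> A then pm j (a j) else 1)"
    proof (cases "j \<in> A")
      case True
      then have "(\<Sum>c\<in>{0..r j}. q j c) = (\<Sum>c\<in>{0..r j}. if a j = c then pm j c else 0)"
        unfolding q_def by (intro sum.cong) auto
      also have "\<dots> = pm j (a j)" using pm_out[OF j, of "a j"] by (simp add: sum.delta')
      finally show ?thesis using True by simp
    next
      case False
      then show ?thesis unfolding q_def using pm_sum_one[OF j] by simp
    qed
  qed
  also have "\<dots> = (\<Prod>j\<in>A. pm j (a j))"
    unfolding prod.If_cases[OF finM] using A by (simp add: Int_absorb1)
  finally show ?thesis .
qed

lemma Gmat_mult:
  "Gmat A x a * Gmat u x b =
     (if \<forall>j\<in>A \<inter> u. a j = b j then Gmat (A \<union> u) x (\<lambda>j. if j \<in> A then a j else b j) else 0)"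
  unfolding Gmat_def by auto

definition Psi :: "(nat \<Rightarrow> nat) \<Rightarrow> (nat \<Rightarrow> nat) \<Rightarrow> nat set \<Rightarrow> nat set \<Rightarrow> real" where
  "Psi a b u E = (if \<forall>j\<in>E. a j = b j then \<Prod>j\<in>u - E. pm j (b j) else 0) - (\<Prod>j\<in>u. pm j (b j))"

lemma BB_ind:
  assumes A: "A \<subseteq> M" and u: "u \<subseteq> M"
  shows "BB (\<lambda>x. Gmat A x a) (\<lambda>x. Gmat u x b) = (\<Prod>j\<in>A. pm j (a j)) * Psi a b u (A \<inter> u)"
proof -
  have fA: "finite A" using A finM finite_subset by blast
  have fu: "finite u" using u finM finite_subset by blast
  have "EE (\<lambda>x. Gmat A x a * Gmat u x b) =
     (if \<forall>j\<in>A \<inter> u. a j = b j then (\<Prod>j\<in>A. pm j (a j)) * (\<Prod>j\<in>u - A. pm j (b j)) else 0)"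
  proof (cases "\<forall>j\<in>A \<inter> u. a j = b j")
    case True
    have "EE (\<lambda>x. Gmat A x a * Gmat u x b) = EE (\<lambda>x. Gmat (A \<union> u) x (\<lambda>j. if j \<in> A then a j else b j))"
      unfolding Gmat_mult using True by simp
    also have "\<dots> = (\<Prod>j\<in>A \<union> u. pm j (if j \<in> A then a j else b j))"
      by (rule EE_ind) (use A u in auto)
    also have "\<dots> = (\<Prod>j\<in>A \<union> (u - A). pm j (if j \<in> A then a j else b j))" by simp
    also have "\<dots> = (\<Prod>j\<in>A. pm j (if j \<in> A then a j else b j)) * (\<Prod>j\<in>u - A. pm j (if j \<in> A then a j else b j))"
      by (rule prod.union_disjoint) (use fA fu in auto)
    also have "\<dots> = (\<Prod>j\<in>A. pm j (a j)) * (\<Prod>j\<in>u - A. pm j (b j))"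
      by (intro arg_cong2[where f="(*)"] prod.cong) auto
    finally show ?thesis using True by simp
  next
    case False
    then have "\<And>x. Gmat A x a * Gmat u x b = 0" unfolding Gmat_mult by (subst if_not_P) auto
    then have "EE (\<lambda>x. Gmat A x a * Gmat u x b) = 0" unfolding EE_def by (simp del: mult_eq_0_iff)
    then show ?thesis by (simp only: if_not_P[OF False])
  qed
  moreover have "u - A = u - (A \<inter> u)" by blast
  ultimately show ?thesis
    unfolding BB_EE EE_ind[OF A] EE_ind[OF u] Psi_def by (simp add: algebra_simps)
qed

lemma BB_diff_right: "BB h (\<lambda>x. f x - g x) = BB h f - BB h g"
  using BB_diff_left[of f g h] by (simp add: BB_sym)

lemma BB_transfer:
  assumes H: "\<forall>w\<in>S. BB g (F w) = (\<Sum>v\<in>S. U v * BB (F v) (F w))"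
    and i: "i \<in> S" and T: "T \<subseteq> S"
  shows "BB g (\<lambda>x. F i x - (\<Sum>l\<in>T. c l * F l x)) =
         (\<Sum>v\<in>S. U v * BB (F v) (\<lambda>x. F i x - (\<Sum>l\<in>T. c l * F l x)))"
proof -
  have "BB g (\<lambda>x. F i x - (\<Sum>l\<in>T. c l * F l x)) = BB g (F i) - (\<Sum>l\<in>T. c l * BB g (F l))"
    unfolding BB_diff_right BB_sum_right by simp
  also have "\<dots> = (\<Sum>v\<in>S. U v * BB (F v) (F i)) - (\<Sum>l\<in>T. c l * (\<Sum>v\<in>S. U v * BB (F v) (F l)))"
    using H i T by (auto intro!: sum.cong)
  also have "(\<Sum>l\<in>T. c l * (\<Sum>v\<in>S. U v * BB (F v) (F l))) = (\<Sum>v\<in>S. U v * (\<Sum>l\<in>T. c l * BB (F v) (F l)))"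
  proof -
    have "(\<Sum>l\<in>T. c l * (\<Sum>v\<in>S. U v * BB (F v) (F l))) = (\<Sum>l\<in>T. \<Sum>v\<in>S. U v * (c l * BB (F v) (F l)))"
      by (simp add: sum_distrib_left algebra_simps)
    also have "\<dots> = (\<Sum>v\<in>S. \<Sum>l\<in>T. U v * (c l * BB (F v) (F l)))" by (rule sum.swap)
    also have "\<dots> = (\<Sum>v\<in>S. U v * (\<Sum>l\<in>T. c l * BB (F v) (F l)))" by (simp add: sum_distrib_left)
    finally show ?thesis .
  qed
  also have "(\<Sum>v\<in>S. U v * BB (F v) (F i)) - (\<Sum>v\<in>S. U v * (\<Sum>l\<in>T. c l * BB (F v) (F l))) =
      (\<Sum>v\<in>S. U v * (BB (F v) (F i) - (\<Sum>l\<in>T. c l * BB (F v) (F l))))"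
    by (simp add: sum_subtractf right_diff_distrib)
  also have "\<dots> = (\<Sum>v\<in>S. U v * BB (F v) (\<lambda>x. F i x - (\<Sum>l\<in>T. c l * F l x)))"
    unfolding BB_diff_right BB_sum_right by simp
  finally show ?thesis .
qed

lemma LI:
  assumes F: "\<forall>t\<in>F. t \<subseteq> M \<and> t \<noteq> {}" and fF: "finite F"
    and eq: "\<forall>x\<in>CC. (\<Sum>w\<in>fcols r F. \<alpha> w * Gmat (fst w) x (snd w)) = \<kappa>"
  shows "\<forall>w\<in>fcols r F. \<alpha> w = 0"
proof -
  have fS: "finite (fcols r F)" using finite_fcols[OF finM fF] F by blast
  have x0: "(\<lambda>j. 0::nat) \<in> CC" by (simp add: cells_def)
  have "\<forall>w\<in>fcols r F. Gmat (fst w) (\<lambda>j. 0) (snd w) = 0"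
  proof
    fix w assume w: "w \<in> fcols r F"
    then obtain t c where tc: "w = (t,c)" "t \<in> F" "c \<in> tcols r t" by (auto simp: fcols_def)
    then obtain j where "j \<in> t" using F by blast
    then have "c j \<noteq> 0" using tc by (auto simp: tcols_def)
    then show "Gmat (fst w) (\<lambda>j. 0) (snd w) = 0" using tc \<open>j \<in> t\<close> by (auto simp: Gmat_def)
  qed
  then have k0: "\<kappa> = 0" using eq x0 by (metis (no_types, lifting) mult_zero_right sum.neutral)
  have main: "\<alpha> (t,c) = 0" if "(t,c) \<in> fcols r F" for t c
    using that
  proof (induction "card t" arbitrary: t c rule: less_induct)
    case less
    have t: "t \<in> F" and c: "c \<in> tcols r t" using less.prems by (auto simp: fcols_def)
    have tM: "t \<subseteq> M" using F t by blast
    have ft: "finite t" using tM finM finite_subset by blast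
    have cC: "c \<in> CC" using tcols_sub_cells[OF tM] c by blast
    have "(\<Sum>w\<in>fcols r F. \<alpha> w * Gmat (fst w) c (snd w)) = (\<Sum>w\<in>fcols r F. if w = (t,c) then \<alpha> w else 0)"
    proof (rule sum.cong[OF refl])
      fix w assume w: "w \<in> fcols r F"
      then obtain u c' where uc: "w = (u,c')" "u \<in> F" "c' \<in> tcols r u" by (auto simp: fcols_def)
      show "\<alpha> w * Gmat (fst w) c (snd w) = (if w = (t,c) then \<alpha> w else 0)"
      proof (cases "\<forall>j\<in>u. c j = c' j")
        case False then show ?thesis using uc by (auto simp: Gmat_def)
      next
        case True
        have ut: "u \<subseteq> t"
        proof
          fix j assume "j \<in> u"
          then have "c' j \<ge> 1" "c j = c' j" using uc True by (auto simp: tcols_def)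
          then show "j \<in> t" using c by (auto simp: tcols_def)
        qed
        show ?thesis
        proof (cases "u = t")
          case True
          have "c' = c"
          proof
            fix j show "c' j = c j"
              using \<open>\<forall>j\<in>u. c j = c' j\<close> uc c True by (cases "j \<in> t") (auto simp: tcols_def)
          qed
          then show ?thesis using uc True \<open>\<forall>j\<in>u. c j = c' j\<close> by (simp add: Gmat_def)
        next
          case False
          then have "u \<subset> t" using ut by blast
          then have "card u < card t" using ft by (simp add: psubset_card_mono)
          then have "\<alpha> (u,c') = 0" using less.hyps[of u c'] uc w by simp
          then show ?thesis using uc False by simp
        qed
      qed
    qed
    also have "\<dots> = \<alpha> (t,c)" using less.prems fS by (simp add: sum.delta')
    finally show ?case using eq cC k0 by simp
  qed
  show ?thesis using main by auto
qed

end

lemma incl_excl_swap: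
  fixes K :: "'a set set" and \<Phi> :: "'a set \<Rightarrow> real"
  assumes fK: "finite K" and m0: "m0 \<in> K" and D: "D \<subseteq> m0"
  shows "(\<Sum>G\<in>Pne K. - ((-1) ^ card G) * \<Phi> (\<Inter>G \<inter> D)) = \<Phi> D"
proof -
  let ?c = "\<lambda>G::'a set set. - ((-1::real) ^ card G)"
  let ?K' = "K - {m0}"
  have fK': "finite ?K'" using fK by simp
  have split: "Pne K = {G. G \<subseteq> ?K' \<and> G \<noteq> {}} \<union> insert m0 ` Pow ?K'"
  proof (rule Set.set_eqI)
    fix G show "G \<in> Pne K \<longleftrightarrow> G \<in> {G. G \<subseteq> ?K' \<and> G \<noteq> {}} \<union> insert m0 ` Pow ?K'"
    proof
      assume G: "G \<in> Pne K"
      show "G \<in> {G. G \<subseteq> ?K' \<and> G \<noteq> {}} \<union> insert m0 ` Pow ?K'"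
      proof (cases "m0 \<in> G")
        case True
        then have "G = insert m0 (G - {m0})" by blast
        moreover have "G - {m0} \<in> Pow ?K'" using G by (auto simp: Pne_def)
        ultimately show ?thesis by blast
      next
        case False then show ?thesis using G by (auto simp: Pne_def)
      qed
    next
      assume "G \<in> {G. G \<subseteq> ?K' \<and> G \<noteq> {}} \<union> insert m0 ` Pow ?K'"
      then show "G \<in> Pne K" using m0 by (auto simp: Pne_def)
    qed
  qed
  have disj: "{G. G \<subseteq> ?K' \<and> G \<noteq> {}} \<inter> insert m0 ` Pow ?K' = {}" by auto
  have fin1: "finite {G. G \<subseteq> ?K' \<and> G \<noteq> {}}" using fK' by (simp add: finite_subset[of _ "Pow ?K'"] subset_iff)
  have fin2: "finite (insert m0 ` Pow ?K')" using fK' by simp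
  have inj: "inj_on (insert m0) (Pow ?K')"
    by (rule inj_onI) (auto simp: insert_ident)
  have "(\<Sum>G\<in>insert m0 ` Pow ?K'. ?c G * \<Phi> (\<Inter>G \<inter> D)) =
        (\<Sum>G\<in>Pow ?K'. ?c (insert m0 G) * \<Phi> (\<Inter>(insert m0 G) \<inter> D))"
    by (rule sum.reindex[OF inj, unfolded comp_def])
  also have "\<dots> = (\<Sum>G\<in>Pow ?K'. - ?c G * \<Phi> (\<Inter>G \<inter> D))"
  proof (rule sum.cong[OF refl])
    fix G assume G: "G \<in> Pow ?K'"
    then have "m0 \<notin> G" "finite G" using fK' finite_subset by auto
    then have "card (insert m0 G) = Suc (card G)" by simp
    moreover have "\<Inter>(insert m0 G) \<inter> D = \<Inter>G \<inter> D" using D by auto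
    ultimately show "?c (insert m0 G) * \<Phi> (\<Inter>(insert m0 G) \<inter> D) = - ?c G * \<Phi> (\<Inter>G \<inter> D)"
      by simp
  qed
  also have "\<dots> = (\<Sum>G\<in>insert {} {G. G \<subseteq> ?K' \<and> G \<noteq> {}}. - ?c G * \<Phi> (\<Inter>G \<inter> D))"
    by (rule sum.cong) auto
  also have "\<dots> = \<Phi> D - (\<Sum>G\<in>{G. G \<subseteq> ?K' \<and> G \<noteq> {}}. ?c G * \<Phi> (\<Inter>G \<inter> D))"
    using fin1 by (simp add: sum_negf)
  finally have 2: "(\<Sum>G\<in>insert m0 ` Pow ?K'. ?c G * \<Phi> (\<Inter>G \<inter> D)) =
     \<Phi> D - (\<Sum>G\<in>{G. G \<subseteq> ?K' \<and> G \<noteq> {}}. ?c G * \<Phi> (\<Inter>G \<inter> D))" .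
  show ?thesis unfolding split sum.union_disjoint[OF fin1 fin2 disj] 2 by simp
qed


lemma exists_maximal:
  assumes fV: "finite V" and fin: "\<forall>m\<in>V. finite m" and u: "u \<in> V"
  shows "\<exists>m\<in>maximal_sets V. u \<subseteq> m"
proof -
  let ?S = "{m\<in>V. u \<subseteq> m}"
  have "finite ?S" "?S \<noteq> {}" using fV u by auto
  then have "Max (card ` ?S) \<in> card ` ?S" by (intro Max_in) auto
  then obtain m where m: "m \<in> ?S" and mc: "card m = Max (card ` ?S)" by auto
  have mx: "\<forall>y\<in>?S. card y \<le> card m"
    using \<open>finite ?S\<close> unfolding mc by (auto intro: Max_ge)
  have "\<not> (\<exists>m'\<in>V. m \<subset> m')"
  proof
    assume "\<exists>m'\<in>V. m \<subset> m'"
    then obtain m' where "m' \<in> V" "m \<subset> m'" by blast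
    then have "card m < card m'" "m' \<in> ?S" using fin m psubset_card_mono by auto
    then show False using mx by fastforce
  qed
  then have "m \<in> maximal_sets V" using m unfolding maximal_sets_def by simp
  then show ?thesis using m by blast
qed

lemma order_max:
  assumes "finite ord" "trans ord" "irrefl ord" "Z \<noteq> {}"
  shows "\<exists>z\<in>Z. \<forall>y\<in>Z. (z,y) \<notin> ord"
proof -
  have "ord\<^sup>+ = ord" using assms(2) by (rule trancl_id)
  then have "acyclic ord" unfolding acyclic_irrefl using assms(3) by simp
  then have wf: "wf (ord\<inverse>)" using finite_acyclic_wf_converse assms(1) by blast
  obtain z where "z \<in> Z" "\<forall>y. (y, z) \<in> ord\<inverse> \<longrightarrow> y \<notin> Z"
    using wfE_min[OF wf] assms(4) by blast
  then show ?thesis by blast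
qed


lemma Kth_inter:
  assumes "G \<in> Kth K t h'" "t \<inter> h' = {}"
  shows "\<Inter>G \<inter> (t \<union> h') = t"
  using assms unfolding Kth_def Kt_def by blast



theorem theorem2:
  fixes d :: nat and r :: "nat \<Rightarrow> nat" and M :: "nat set"
    and \<pi> :: "(nat \<Rightarrow> nat) \<Rightarrow> real"
    and \<N> :: "nat set set" and a b :: "nat set"
    and I :: "nat set set"
    and h :: "nat set \<Rightarrow> nat set" and jh :: "nat set \<Rightarrow> nat \<Rightarrow> nat"
  defines "C \<equiv> cells r M"
  defines "V \<equiv> (\<Union>N\<in>\<N>. Pne N)"
  defines "\<A> \<equiv> {t. t \<subseteq> M \<and> t \<inter> a \<noteq> {} \<and> t \<inter> b \<noteq> {}}"
  defines "R \<equiv> V - I"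
  defines "SI \<equiv> fcols r I"
  defines "SR \<equiv> fcols r R"
  defines "F_IH \<equiv> Fmat C \<pi> Gfam (GH h jh)"
    and "F_IR \<equiv> Fmat C \<pi> Gfam Gfam"
    and "F_RR \<equiv> Fmat C \<pi> Gfam Gfam"
    and "F_RH \<equiv> Fmat C \<pi> Gfam (GH h jh)"
  assumes M_sub: "M \<subseteq> {1..d}"
    and pos: "\<forall>x\<in>C. \<pi> x > 0"
    and tot: "(\<Sum>x\<in>C. \<pi> x) = 1"
    and indep: "\<forall>x\<in>C. \<pi> x = (\<Prod>j\<in>M. \<Sum>y\<in>{y\<in>C. y j = x j}. \<pi> y)"
    and N_proper: "\<forall>N\<in>\<N>. N \<subset> M"
    and ab: "a \<subseteq> M" "b \<subseteq> M" "a \<inter> b = {}" "a \<noteq> {}" "b \<noteq> {}"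
    and I_sub: "I \<subseteq> V \<inter> \<A>"
    and valid: "valid_replacement r M I R h jh"
  shows "nonsingular_on SI
           (\<lambda>i k. F_IH i k - (\<Sum>j\<in>SR. \<Sum>l\<in>SR.
                     F_IR i j * inv_on SR F_RR j l * F_RH l k))"
proof -
  have finM: "finite M" using M_sub finite_subset by blast
  interpret pset r M \<pi>
    by unfold_locales (use finM pos tot indep in \<open>simp_all add: C_def\<close>)
  have CC: "C = CC" by (simp add: C_def)
  have V_sub: "\<forall>t\<in>V. t \<subseteq> M \<and> t \<noteq> {}" using N_proper unfolding V_def Pne_def by blast
  have fV: "finite V"
    by (rule finite_subset[of _ "Pow M"]) (use V_sub finM in auto)
  have Vfin: "\<forall>m\<in>V. finite m" using V_sub finM finite_subset by blast
  have IV: "I \<subseteq> V" using I_sub by blast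
  have IR: "I \<union> R = V" "I \<inter> R = {}" using IV unfolding R_def by auto
  have fI: "finite I" and fR: "finite R" using fV IV unfolding R_def by (auto intro: finite_subset)
  define SV where "SV = fcols r V"
  have fSI: "finite SI" unfolding SI_def using finite_fcols[OF finM fI] V_sub IV by blast
  have fSR: "finite SR" unfolding SR_def R_def using finite_fcols[OF finM, of "V - I"] fV V_sub by blast
  have fSV: "finite SV" unfolding SV_def using finite_fcols[OF finM fV] V_sub by blast
  have SV_un: "SV = SI \<union> SR" unfolding SV_def SI_def SR_def fcols_def using IR by auto
  have SV_disj: "SI \<inter> SR = {}" unfolding SI_def SR_def fcols_def using IR by auto
  define K where "K = maximal_sets V"
  have fK: "finite K" unfolding K_def maximal_sets_def using fV by simp
  have valid': "inj_on (\<lambda>t. t \<union> h t) I \<and>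
       (\<forall>t\<in>I. h t \<subseteq> M \<and> t \<inter> h t = {} \<and>
              (\<forall>j\<in>h t. 1 \<le> jh t j \<and> jh t j \<le> r j) \<and>
              (\<forall>j. j \<notin> h t \<longrightarrow> jh t j = 0)) \<and>
       (\<forall>t\<in>I. (\<Sum>G\<in>Kth K t (h t). (-1::int) ^ card G) \<noteq> 0) \<and>
       (\<exists>ord. ord \<subseteq> I \<times> I \<and> strict_linear_order_on I ord \<and>
          (\<forall>s\<in>I. \<forall>t\<in>I. s \<subset> t \<longrightarrow> (s, t) \<in> ord) \<and>
          (\<forall>t\<in>I. \<forall>G\<in>Kbar K t (h t).
             (\<Inter>G) \<inter> (t \<union> h t) \<in> R \<or> ((\<Inter>G) \<inter> (t \<union> h t) \<in> I \<and> ((\<Inter>G) \<inter> (t \<union> h t), t) \<in> ord)))"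
    using valid unfolding valid_replacement_def Let_def IR(1) K_def[symmetric] .
  note hM = valid'[THEN conjunct2, THEN conjunct1]
  note kap = valid'[THEN conjunct2, THEN conjunct2, THEN conjunct1]
  obtain ord where ordI: "ord \<subseteq> I \<times> I" and slo: "strict_linear_order_on I ord"
    and ord3: "\<forall>t\<in>I. \<forall>G\<in>Kbar K t (h t).
             (\<Inter>G) \<inter> (t \<union> h t) \<in> R \<or> ((\<Inter>G) \<inter> (t \<union> h t) \<in> I \<and> ((\<Inter>G) \<inter> (t \<union> h t), t) \<in> ord)"
    using valid'[THEN conjunct2, THEN conjunct2, THEN conjunct2] by (elim exE conjE)
  have ord_trans: "trans ord" and ord_irr: "irrefl ord" using slo unfolding strict_linear_order_on_def by auto
  have ord_fin: "finite ord" using ordI fI finite_subset by blast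
  define gf where "gf w x = Gfam x w" for w x
  define gH where "gH k x = GH h jh x k" for k x
  have Fm: "\<And>GX GY i k. Fmat C \<pi> GX GY i k = BB (\<lambda>x. GX x i) (\<lambda>x. GY x k)"
    unfolding Fmat_def BB_def CC by simp
  have gfG: "\<And>w x. gf w x = Gmat (fst w) x (snd w)" unfolding gf_def Gfam_def by simp
  have injRR: "\<forall>m\<in>SR. \<alpha> m = 0" if H: "\<forall>l\<in>SR. (\<Sum>m\<in>SR. F_RR l m * \<alpha> m) = 0" for \<alpha>
  proof -
    define f where "f = (\<lambda>x. \<Sum>m\<in>SR. \<alpha> m * gf m x)"
    have "BB f f = (\<Sum>l\<in>SR. \<alpha> l * BB (gf l) f)" unfolding f_def by (rule BB_sum_left)
    also have "\<dots> = (\<Sum>l\<in>SR. \<alpha> l * (\<Sum>m\<in>SR. \<alpha> m * BB (gf l) (gf m)))"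
      unfolding f_def BB_sum_right ..
    also have "\<dots> = (\<Sum>l\<in>SR. \<alpha> l * (\<Sum>m\<in>SR. F_RR l m * \<alpha> m))"
      unfolding F_RR_def Fm gf_def by (simp add: mult.commute)
    also have "\<dots> = 0" using H by simp
    finally have "\<forall>x\<in>CC. f x = EE f" by (rule BB_self_zero)
    then have "\<forall>x\<in>CC. (\<Sum>w\<in>fcols r R. \<alpha> w * Gmat (fst w) x (snd w)) = EE f"
      unfolding f_def gfG SR_def .
    then show ?thesis unfolding SR_def
      by (rule LI[rotated 2]) (use V_sub fR in \<open>auto simp: R_def\<close>)
  qed
  define W where "W = inv_on SR F_RR"
  have WF: "\<forall>j\<in>SR. \<forall>m\<in>SR. (\<Sum>l\<in>SR. W j l * F_RR l m) = (if j = m then 1 else 0)"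
    using inv_of_inj[OF fSR, of F_RR] injRR unfolding W_def by blast
  define lam where "lam i l = (\<Sum>j\<in>SR. F_IR i j * W j l)" for i l
  define res where "res i = (\<lambda>x. gf i x - (\<Sum>l\<in>SR. lam i l * gf l x))" for i
  have BBres: "BB (res i) g = BB (gf i) g - (\<Sum>l\<in>SR. lam i l * BB (gf l) g)" for i g
    unfolding res_def BB_diff_left BB_sum_left by simp
  have Qeq: "F_IH i k - (\<Sum>j\<in>SR. \<Sum>l\<in>SR. F_IR i j * W j l * F_RH l k) = BB (res i) (gH k)" for i k
  proof -
    have "(\<Sum>j\<in>SR. \<Sum>l\<in>SR. F_IR i j * W j l * F_RH l k) = (\<Sum>l\<in>SR. \<Sum>j\<in>SR. F_IR i j * W j l * F_RH l k)"
      by (rule sum.swap)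
    also have "\<dots> = (\<Sum>l\<in>SR. lam i l * BB (gf l) (gH k))"
      unfolding lam_def F_RH_def Fm gf_def gH_def by (simp add: sum_distrib_right)
    finally show ?thesis unfolding BBres F_IH_def Fm gf_def gH_def by simp
  qed
  have orth: "BB (res i) (gf m) = 0" if m: "m \<in> SR" for i m
  proof -
    have "(\<Sum>l\<in>SR. lam i l * BB (gf l) (gf m)) = (\<Sum>l\<in>SR. \<Sum>j\<in>SR. F_IR i j * (W j l * F_RR l m))"
      unfolding lam_def F_RR_def Fm gf_def by (simp add: sum_distrib_right mult.assoc)
    also have "\<dots> = (\<Sum>j\<in>SR. \<Sum>l\<in>SR. F_IR i j * (W j l * F_RR l m))" by (rule sum.swap)
    also have "\<dots> = (\<Sum>j\<in>SR. F_IR i j * (if j = m then 1 else 0))"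
      using WF m by (simp add: sum_distrib_left[symmetric])
    also have "\<dots> = (\<Sum>j\<in>SR. if j = m then F_IR i j else 0)" by (intro sum.cong) auto
    also have "\<dots> = F_IR i m" using m fSR by (simp add: sum.delta)
    finally show ?thesis unfolding BBres F_IR_def Fm gf_def by simp
  qed
  have resres: "BB (res i) (res v) = BB (res i) (gf v)" for i v
    unfolding res_def BB_diff_right BB_sum_right using orth[unfolded res_def] by simp
  define Ak where "Ak k = fst k \<union> h (fst k)" for k :: "nat set \<times> (nat \<Rightarrow> nat)"
  define ak where "ak k = (\<lambda>j. snd k j + jh (fst k) j)" for k :: "nat set \<times> (nat \<Rightarrow> nat)"
  define sG where "sG k G = \<Inter>G \<inter> Ak k" for k :: "nat set \<times> (nat \<Rightarrow> nat)" and G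
  define \<sigma> where "\<sigma> k G = (sG k G, \<lambda>j. if j \<in> sG k G then ak k j else 0)" for k :: "nat set \<times> (nat \<Rightarrow> nat)" and G
  define wt where "wt k G = - ((-1::real) ^ card G) * (\<Prod>j\<in>Ak k - sG k G. pm j (ak k j))" for k :: "nat set \<times> (nat \<Rightarrow> nat)" and G
  define U where "U v k = (\<Sum>G\<in>Pne K. if \<sigma> k G = v then wt k G else 0)" for v k
  have kSI: "fst k \<in> I" "snd k \<in> tcols r (fst k)" if "k \<in> SI" for k
    using that unfolding SI_def fcols_def by auto
  have hk: "h (fst k) \<subseteq> M \<and> fst k \<inter> h (fst k) = {} \<and>
              (\<forall>j\<in>h (fst k). 1 \<le> jh (fst k) j \<and> jh (fst k) j \<le> r j) \<and>
              (\<forall>j. j \<notin> h (fst k) \<longrightarrow> jh (fst k) j = 0)" if "k \<in> SI" for k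
    using bspec[OF hM kSI(1)[OF that]] .
  have tkM: "fst k \<subseteq> M" if "k \<in> SI" for k
  proof -
    have "fst k \<in> V" using kSI(1)[OF that] IV by blast
    then show ?thesis using V_sub by blast
  qed
  have AkM: "Ak k \<subseteq> M" if "k \<in> SI" for k
    using tkM[OF that] hk[OF that] unfolding Ak_def by simp
  have d1: "gH k x = Gmat (Ak k) x (ak k)" if "k \<in> SI" for k x
  proof -
    have t: "fst k \<inter> h (fst k) = {}" "\<forall>j. j \<notin> h (fst k) \<longrightarrow> jh (fst k) j = 0"
      using hk[OF that] by auto
    have c: "\<forall>j. j \<notin> fst k \<longrightarrow> snd k j = 0" using kSI[OF that] unfolding tcols_def by auto
    show ?thesis unfolding gH_def GH_def Ak_def ak_def Gmat_def using t c
      by (auto simp: disjoint_iff)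
  qed
  have ak_range: "1 \<le> ak k j \<and> ak k j \<le> r j" if "k \<in> SI" "j \<in> Ak k" for k j
  proof -
    have t: "fst k \<inter> h (fst k) = {}" "\<forall>j. j \<notin> h (fst k) \<longrightarrow> jh (fst k) j = 0"
      "\<forall>j\<in>h (fst k). 1 \<le> jh (fst k) j \<and> jh (fst k) j \<le> r j"
      using hk[OF that(1)] by auto
    have c: "\<forall>j. j \<notin> fst k \<longrightarrow> snd k j = 0" "\<forall>j\<in>fst k. 1 \<le> snd k j \<and> snd k j \<le> r j"
      using kSI[OF that(1)] unfolding tcols_def by auto
    show ?thesis using that(2) t c unfolding Ak_def ak_def by (auto simp: disjoint_iff)
  qed
  have sG_Kth: "sG k G = fst k" if "k \<in> SI" "G \<in> Kth K (fst k) (h (fst k))" for k G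
    unfolding sG_def Ak_def using Kth_inter[OF that(2)] hk[OF that(1)] by simp
  have Kth_Pne: "Kth K t h' \<subseteq> Pne K" for t h'
    unfolding Kth_def Kt_def Pne_def by auto
  have sG_V: "sG k G \<in> I \<or> sG k G \<in> R" if "k \<in> SI" "G \<in> Pne K" for k G
  proof (cases "G \<in> Kth K (fst k) (h (fst k))")
    case True then show ?thesis using sG_Kth[OF that(1)] kSI[OF that(1)] by simp
  next
    case False
    then have "G \<in> Kbar K (fst k) (h (fst k))" using that(2) unfolding Kbar_def by blast
    then show ?thesis using ord3 kSI[OF that(1)] unfolding sG_def Ak_def by blast
  qed
  have d2: "\<sigma> k G \<in> SV" if "k \<in> SI" "G \<in> Pne K" for k G
  proof -
    have "sG k G \<in> V" using sG_V[OF that] IR by blast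
    moreover have "(\<lambda>j. if j \<in> sG k G then ak k j else 0) \<in> tcols r (sG k G)"
      using ak_range[OF that(1)] unfolding tcols_def sG_def by auto
    ultimately show ?thesis unfolding \<sigma>_def SV_def fcols_def by simp
  qed
  have d2': "gf (\<sigma> k G) = (\<lambda>x. Gmat (sG k G) x (ak k))" for k G
    unfolding gfG \<sigma>_def Gmat_def by simp
  have d3: "BB (gH k) (gf w) = (\<Sum>G\<in>Pne K. wt k G * BB (gf (\<sigma> k G)) (gf w))"
    if k: "k \<in> SI" and w: "w \<in> SV" for k w
  proof -
    obtain u b' where wu: "w = (u, b')" "u \<in> V" using w unfolding SV_def fcols_def by auto
    have uM: "u \<subseteq> M" using wu V_sub by blast
    obtain m0 where m0: "m0 \<in> K" "u \<subseteq> m0" using exists_maximal[OF fV Vfin wu(2)] unfolding K_def by blast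
    have fA: "finite (Ak k)" using AkM[OF k] finM finite_subset by blast
    have "BB (gH k) (gf w) = (\<Prod>j\<in>Ak k. pm j (ak k j)) * Psi (ak k) b' u (Ak k \<inter> u)"
      unfolding d1[OF k, abs_def] wu gfG using BB_ind[OF AkM[OF k] uM] by simp
    also have "\<dots> = (\<Prod>j\<in>Ak k. pm j (ak k j)) *
        (\<Sum>G\<in>Pne K. - ((-1) ^ card G) * Psi (ak k) b' u (\<Inter>G \<inter> (Ak k \<inter> u)))"
    proof -
      have D: "Ak k \<inter> u \<subseteq> m0" using m0(2) by blast
      show ?thesis using incl_excl_swap[OF fK m0(1) D, of "Psi (ak k) b' u"] by simp
    qed
    also have "\<dots> = (\<Sum>G\<in>Pne K. wt k G * BB (gf (\<sigma> k G)) (gf w))"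
      unfolding sum_distrib_left
    proof (rule sum.cong[OF refl])
      fix G assume G: "G \<in> Pne K"
      have sA: "sG k G \<subseteq> Ak k" unfolding sG_def by blast
      have sM: "sG k G \<subseteq> M" using sA AkM[OF k] by blast
      have "BB (gf (\<sigma> k G)) (gf w) = (\<Prod>j\<in>sG k G. pm j (ak k j)) * Psi (ak k) b' u (sG k G \<inter> u)"
        unfolding d2' wu gfG using BB_ind[OF sM uM] by simp
      moreover have "\<Inter>G \<inter> (Ak k \<inter> u) = sG k G \<inter> u" unfolding sG_def by blast
      moreover have "(\<Prod>j\<in>Ak k. pm j (ak k j)) = (\<Prod>j\<in>Ak k - sG k G. pm j (ak k j)) * (\<Prod>j\<in>sG k G. pm j (ak k j))"
        by (rule prod.subset_diff[OF sA fA])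
      ultimately show "(\<Prod>j\<in>Ak k. pm j (ak k j)) * (- ((-1) ^ card G) * Psi (ak k) b' u (\<Inter>G \<inter> (Ak k \<inter> u))) =
          wt k G * BB (gf (\<sigma> k G)) (gf w)"
        unfolding wt_def by simp
    qed
    finally show ?thesis .
  qed
  have d4: "\<forall>w\<in>SV. BB (gH k) (gf w) = (\<Sum>v\<in>SV. U v k * BB (gf v) (gf w))" if k: "k \<in> SI" for k
  proof
    fix w assume w: "w \<in> SV"
    have "(\<Sum>v\<in>SV. U v k * BB (gf v) (gf w)) =
          (\<Sum>v\<in>SV. \<Sum>G\<in>Pne K. if \<sigma> k G = v then wt k G * BB (gf v) (gf w) else 0)"
      unfolding U_def sum_distrib_right by (intro sum.cong) auto
    also have "\<dots> = (\<Sum>G\<in>Pne K. \<Sum>v\<in>SV. if \<sigma> k G = v then wt k G * BB (gf v) (gf w) else 0)"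
      by (rule sum.swap)
    also have "\<dots> = (\<Sum>G\<in>Pne K. wt k G * BB (gf (\<sigma> k G)) (gf w))"
      using d2[OF k] fSV by (intro sum.cong) (auto simp: sum.delta)
    finally show "BB (gH k) (gf w) = (\<Sum>v\<in>SV. U v k * BB (gf v) (gf w))" using d3[OF k w] by simp
  qed
  have step4: "BB (res i) (gH k) = (\<Sum>v\<in>SI. U v k * BB (res i) (res v))" if i: "i \<in> SI" and k: "k \<in> SI" for i k
  proof -
    have iSV: "i \<in> SV" using i SV_un by blast
    have "BB (res i) (gH k) = BB (gH k) (res i)" by (rule BB_sym)
    also have "\<dots> = (\<Sum>v\<in>SV. U v k * BB (gf v) (res i))"
      unfolding res_def by (rule BB_transfer[OF d4[OF k] iSV]) (use SV_un in blast)
    also have "\<dots> = (\<Sum>v\<in>SV. U v k * BB (res i) (gf v))" by (simp add: BB_sym)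
    also have "\<dots> = (\<Sum>v\<in>SI. U v k * BB (res i) (gf v)) + (\<Sum>v\<in>SR. U v k * BB (res i) (gf v))"
      unfolding SV_un by (rule sum.union_disjoint[OF fSI fSR SV_disj])
    also have "(\<Sum>v\<in>SR. U v k * BB (res i) (gf v)) = 0" using orth by simp
    finally show ?thesis using resres by simp
  qed
  have inj: "\<forall>k\<in>SI. \<beta> k = 0"
    if H: "\<forall>i\<in>SI. (\<Sum>k\<in>SI. (F_IH i k - (\<Sum>j\<in>SR. \<Sum>l\<in>SR. F_IR i j * inv_on SR F_RR j l * F_RH l k)) * \<beta> k) = 0"
    for \<beta>
  proof -
    define \<gamma> where "\<gamma> v = (\<Sum>k\<in>SI. U v k * \<beta> k)" for v
    define fg where "fg = (\<lambda>x. \<Sum>v\<in>SI. \<gamma> v * res v x)"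
    have z: "BB (res i) fg = 0" if i: "i \<in> SI" for i
    proof -
      have "0 = (\<Sum>k\<in>SI. BB (res i) (gH k) * \<beta> k)" using H i Qeq unfolding W_def by simp
      also have "\<dots> = (\<Sum>k\<in>SI. (\<Sum>v\<in>SI. U v k * BB (res i) (res v)) * \<beta> k)"
        using step4[OF i] by (intro sum.cong) auto
      also have "\<dots> = (\<Sum>k\<in>SI. \<Sum>v\<in>SI. U v k * BB (res i) (res v) * \<beta> k)"
        by (simp add: sum_distrib_right)
      also have "\<dots> = (\<Sum>v\<in>SI. \<Sum>k\<in>SI. U v k * BB (res i) (res v) * \<beta> k)" by (rule sum.swap)
      also have "\<dots> = (\<Sum>v\<in>SI. \<gamma> v * BB (res i) (res v))"
      proof (rule sum.cong[OF refl])
        fix v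
        have "(\<Sum>k\<in>SI. U v k * BB (res i) (res v) * \<beta> k) = (\<Sum>k\<in>SI. (U v k * \<beta> k) * BB (res i) (res v))"
          by (intro sum.cong) (simp_all add: algebra_simps)
        then show "(\<Sum>k\<in>SI. U v k * BB (res i) (res v) * \<beta> k) = \<gamma> v * BB (res i) (res v)"
          unfolding \<gamma>_def by (simp add: sum_distrib_right)
      qed
      also have "\<dots> = BB (res i) fg" unfolding fg_def BB_sum_right ..
      finally show ?thesis by simp
    qed
    have "BB fg fg = (\<Sum>i\<in>SI. \<gamma> i * BB (res i) fg)" unfolding fg_def by (rule BB_sum_left)
    also have "\<dots> = 0" using z by simp
    finally have cst: "\<forall>x\<in>CC. fg x = EE fg" by (rule BB_self_zero)
    define \<alpha> where "\<alpha> w = (if w \<in> SI then \<gamma> w else - (\<Sum>v\<in>SI. \<gamma> v * lam v w))" for w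
    have fgeq: "fg x = (\<Sum>w\<in>fcols r V. \<alpha> w * Gmat (fst w) x (snd w))" for x
    proof -
      have "fg x = (\<Sum>v\<in>SI. \<gamma> v * gf v x) - (\<Sum>v\<in>SI. \<Sum>l\<in>SR. \<gamma> v * lam v l * gf l x)"
        unfolding fg_def res_def by (simp add: right_diff_distrib sum_subtractf sum_distrib_left mult.assoc)
      also have "(\<Sum>v\<in>SI. \<Sum>l\<in>SR. \<gamma> v * lam v l * gf l x) = (\<Sum>l\<in>SR. \<Sum>v\<in>SI. \<gamma> v * lam v l * gf l x)"
        by (rule sum.swap)
      also have "(\<Sum>v\<in>SI. \<gamma> v * gf v x) - (\<Sum>l\<in>SR. \<Sum>v\<in>SI. \<gamma> v * lam v l * gf l x) =
          (\<Sum>w\<in>SI. \<alpha> w * gf w x) + (\<Sum>w\<in>SR. \<alpha> w * gf w x)"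
      proof -
        have "(\<Sum>w\<in>SI. \<alpha> w * gf w x) = (\<Sum>v\<in>SI. \<gamma> v * gf v x)" unfolding \<alpha>_def by simp
        moreover have "(\<Sum>w\<in>SR. \<alpha> w * gf w x) = - (\<Sum>l\<in>SR. \<Sum>v\<in>SI. \<gamma> v * lam v l * gf l x)"
          unfolding \<alpha>_def using SV_disj
          by (auto simp: sum_negf[symmetric] sum_distrib_right intro!: sum.cong)
        ultimately show ?thesis by simp
      qed
      also have "\<dots> = (\<Sum>w\<in>SV. \<alpha> w * gf w x)"
        unfolding SV_un by (rule sum.union_disjoint[OF fSI fSR SV_disj, symmetric])
      finally show ?thesis unfolding SV_def gfG .
    qed
    have "\<forall>w\<in>fcols r V. \<alpha> w = 0"
      using LI[OF V_sub fV, of \<alpha> "EE fg"] cst fgeq by simp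
    then have g0: "\<forall>v\<in>SI. \<gamma> v = 0"
    proof (intro ballI)
      fix v assume "\<forall>w\<in>fcols r V. \<alpha> w = 0" "v \<in> SI"
      then have "\<alpha> v = 0" unfolding SV_def[symmetric] SV_un by blast
      then show "\<gamma> v = 0" using \<open>v \<in> SI\<close> unfolding \<alpha>_def by simp
    qed
    have U2: "(fst v, fst k) \<in> ord" if v: "v \<in> SI" and k: "k \<in> SI" and vk: "v \<noteq> k" and U: "U v k \<noteq> 0" for v k
    proof -
      have "\<exists>G\<in>Pne K. \<sigma> k G = v"
      proof (rule ccontr)
        assume "\<not> (\<exists>G\<in>Pne K. \<sigma> k G = v)"
        then have "U v k = 0" unfolding U_def by (intro sum.neutral) auto
        then show False using U by simp
      qed
      then obtain G where G: "G \<in> Pne K" "\<sigma> k G = v" by blast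
      show ?thesis
      proof (cases "G \<in> Kth K (fst k) (h (fst k))")
        case True
        have "\<sigma> k G = k"
        proof -
          have s: "sG k G = fst k" by (rule sG_Kth[OF k True])
          have "(\<lambda>j. if j \<in> fst k then ak k j else 0) = snd k"
          proof
            fix j
            have "\<forall>j. j \<notin> fst k \<longrightarrow> snd k j = 0" using kSI[OF k] unfolding tcols_def by auto
            moreover have "j \<in> fst k \<Longrightarrow> jh (fst k) j = 0" using hk[OF k] by blast
            ultimately show "(if j \<in> fst k then ak k j else 0) = snd k j" unfolding ak_def by auto
          qed
          then show ?thesis unfolding \<sigma>_def s by simp
        qed
        then show ?thesis using G vk by simp
      next
        case False
        have "G \<in> Kbar K (fst k) (h (fst k))" unfolding Kbar_def using G(1) False by (rule DiffI)
        then have "sG k G \<in> R \<or> (sG k G \<in> I \<and> (sG k G, fst k) \<in> ord)"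
          unfolding sG_def Ak_def by (rule bspec[OF bspec[OF ord3 kSI(1)[OF k]]])
        moreover have sv: "sG k G = fst v" using arg_cong[OF G(2), of fst] unfolding \<sigma>_def by simp
        moreover have "fst v \<in> I" using kSI[OF v] by simp
        ultimately have "sG k G \<notin> R" using IR(2) by auto
        then have "(sG k G, fst k) \<in> ord" using \<open>sG k G \<in> R \<or> (sG k G \<in> I \<and> (sG k G, fst k) \<in> ord)\<close> by simp
        then show ?thesis unfolding sv .
      qed
    qed
    have U1: "U k k \<noteq> 0" if k: "k \<in> SI" for k
    proof -
      define P where "P = (\<Prod>j\<in>h (fst k). pm j (jh (fst k) j))"
      have hk0: "fst k \<inter> h (fst k) = {}" "h (fst k) \<subseteq> M" "\<forall>j\<in>h (fst k). 1 \<le> jh (fst k) j \<and> jh (fst k) j \<le> r j"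
        using hk[OF k] by auto
      have c0: "\<forall>j. j \<notin> fst k \<longrightarrow> snd k j = 0" using kSI[OF k] unfolding tcols_def by auto
      have Ppos: "P > 0" unfolding P_def using hk0 by (intro prod_pos) (auto intro!: pm_pos)
      have "U k k = (\<Sum>G\<in>Pne K. if G \<in> Kth K (fst k) (h (fst k)) then wt k G else 0)"
        unfolding U_def
      proof (rule sum.cong[OF refl])
        fix G assume G: "G \<in> Pne K"
        show "(if \<sigma> k G = k then wt k G else 0) = (if G \<in> Kth K (fst k) (h (fst k)) then wt k G else 0)"
        proof (cases "G \<in> Kth K (fst k) (h (fst k))")
          case True
          have "\<sigma> k G = k"
          proof -
            have s: "sG k G = fst k" by (rule sG_Kth[OF k True])
            have "(\<lambda>j. if j \<in> fst k then ak k j else 0) = snd k"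
            proof
              fix j
              have "j \<in> fst k \<Longrightarrow> jh (fst k) j = 0" using hk[OF k] by blast
              then show "(if j \<in> fst k then ak k j else 0) = snd k j" using c0 unfolding ak_def by auto
            qed
            then show ?thesis unfolding \<sigma>_def s by simp
          qed
          then show ?thesis using True by simp
        next
          case False
          have "G \<in> Kbar K (fst k) (h (fst k))" unfolding Kbar_def using G False by (rule DiffI)
          then have disj: "sG k G \<in> R \<or> (sG k G \<in> I \<and> (sG k G, fst k) \<in> ord)"
            unfolding sG_def Ak_def by (rule bspec[OF bspec[OF ord3 kSI(1)[OF k]]])
          have "sG k G \<noteq> fst k"
          proof
            assume eq: "sG k G = fst k"
            have "fst k \<notin> R" using IR(2) kSI(1)[OF k] by auto
            then have "(fst k, fst k) \<in> ord" using disj unfolding eq by simp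
            then show False using ord_irr by (simp add: irrefl_def)
          qed
          then have "\<sigma> k G \<noteq> k" unfolding \<sigma>_def by (metis fst_conv)
          then show ?thesis using False by simp
        qed
      qed
      also have "\<dots> = (\<Sum>G\<in>Kth K (fst k) (h (fst k)). wt k G)"
      proof -
        have fPK: "finite (Pne K)" by (rule finite_subset[of _ "Pow K"]) (auto simp: Pne_def fK)
        show ?thesis unfolding sum.inter_restrict[OF fPK, symmetric] Int_absorb1[OF Kth_Pne] ..
      qed
      also have "\<dots> = (\<Sum>G\<in>Kth K (fst k) (h (fst k)). - ((-1::real) ^ card G) * P)"
      proof (rule sum.cong[OF refl])
        fix G assume G: "G \<in> Kth K (fst k) (h (fst k))"
        have "Ak k - sG k G = h (fst k)" using sG_Kth[OF k G] hk0 unfolding Ak_def by blast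
        moreover have "\<forall>j\<in>h (fst k). ak k j = jh (fst k) j" using c0 hk0 unfolding ak_def by auto
        ultimately show "wt k G = - ((-1::real) ^ card G) * P" unfolding wt_def P_def by simp
      qed
      also have "\<dots> = - of_int (\<Sum>G\<in>Kth K (fst k) (h (fst k)). (-1::int) ^ card G) * P"
        by (simp add: sum_distrib_right sum_negf)
      finally have eqU: "U k k = - of_int (\<Sum>G\<in>Kth K (fst k) (h (fst k)). (-1::int) ^ card G) * P" .
      have kk: "(\<Sum>G\<in>Kth K (fst k) (h (fst k)). (-1::int) ^ card G) \<noteq> 0"
        using bspec[OF kap kSI(1)[OF k]] .
      have "(of_int (\<Sum>G\<in>Kth K (fst k) (h (fst k)). (-1::int) ^ card G) :: real) \<noteq> 0"
        using kk of_int_eq_0_iff by blast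
      then show ?thesis unfolding eqU using Ppos by simp
    qed
    show ?thesis
    proof (rule ccontr)
      assume nz: "\<not> (\<forall>k\<in>SI. \<beta> k = 0)"
      define Z where "Z = {t. \<exists>c. (t,c) \<in> SI \<and> \<beta> (t,c) \<noteq> 0}"
      have "Z \<noteq> {}" using nz unfolding Z_def by auto
      then obtain t0 where t0: "t0 \<in> Z" and mx: "\<forall>y\<in>Z. (t0,y) \<notin> ord"
        using order_max[OF ord_fin ord_trans ord_irr] by blast
      obtain c0 where k0: "(t0,c0) \<in> SI" "\<beta> (t0,c0) \<noteq> 0" using t0 unfolding Z_def by blast
      let ?k0 = "(t0,c0)"
      have "\<gamma> ?k0 = (\<Sum>k\<in>SI. if k = ?k0 then U ?k0 k * \<beta> k else 0)"
        unfolding \<gamma>_def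
      proof (rule sum.cong[OF refl])
        fix k assume k: "k \<in> SI"
        show "U ?k0 k * \<beta> k = (if k = ?k0 then U ?k0 k * \<beta> k else 0)"
        proof (cases "k = ?k0")
          case False
          show ?thesis
          proof (cases "U ?k0 k = 0 \<or> \<beta> k = 0")
            case True then show ?thesis by auto
          next
            case F2: False
            then have "(t0, fst k) \<in> ord" using U2[OF k0(1) k] False by fastforce
            moreover have "fst k \<in> Z" using k F2 unfolding Z_def by (cases k) auto
            ultimately show ?thesis using mx by blast
          qed
        qed simp
      qed
      also have "\<dots> = U ?k0 ?k0 * \<beta> ?k0" using k0(1) fSI by (simp add: sum.delta')
      finally have "\<gamma> ?k0 \<noteq> 0" using U1[OF k0(1)] k0(2) by simp
      then show False using g0 k0(1) by blast
    qed
  qed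
  show ?thesis
    by (rule nonsing_of_inj[OF fSI]) (use inj in \<open>simp add: mult.commute\<close>)
qed

end
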